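(* Let $A\in\mathrm{GL}_{n}(\mathbb{Z})$ be irreducible. Then the semidirect product $\mathbb{Z}^{n}\rtimes_{A}\mathbb{Z}$ admits a purely positive length function if and only if $A$ has an eigenvalue of absolute value $1$.
   Context: $\mathbb{Z}^{n}\rtimes_{A}\mathbb{Z}$ is the semidirect product in which a generator of $\mathbb{Z}$ acts on $\mathbb{Z}^n$ by $A$. $A$ is irreducible if $\mathbb{Z}^n$ has no nonzero proper $A$-invariant subgroup $I$ with $\mathbb{Z}^n/I$ torsion-free (equivalently, $\mathbb{Q}^n$ has no nonzero proper $A$-invariant subspace). A length function on a group $G$ is a function $l:G\to[0,\infty)$ such that $l(g^{n})=|n|\,l(g)$ for all $g\in G,n\in\mathbb{Z}$; $l(hgh^{-1})=l(g)$ for all $g,h$; and $l(ab)\leq l(a)+l(b)$ whenever $a,b$ commute. It is purely positive if $l(g)>0$ for every element of infinite order. *)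

theory Defs
  imports "HOL-Analysis.Analysis" "HOL-Algebra.Group"
begin

fun matpow :: "'a::semiring_1^'n^'n \<Rightarrow> nat \<Rightarrow> 'a^'n^'n" where
  "matpow A 0 = mat 1"
| "matpow A (Suc k) = A ** matpow A k"

definition matipow :: "'a::semiring_1^'n^'n \<Rightarrow> int \<Rightarrow> 'a^'n^'n" where
  "matipow A k = (if 0 \<le> k then matpow A (nat k) else matpow (matrix_inv A) (nat (- k)))"

text \<open>The semidirect product Z^n \<rtimes>_A Z: elements (v,k), with the generator (0,1) of Z
  acting on Z^n by A, i.e. (v,k)(w,m) = (v + A^k w, k+m).\<close>
definition semidirect :: "int^'n^'n \<Rightarrow> ((int^'n) \<times> int) monoid" where
  "semidirect A = \<lparr> carrier = UNIV,
      mult = (\<lambda>(v,k) (w,m). (v + matipow A k *v w, k + m)),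
      one = (0, 0) \<rparr>"

text \<open>A is irreducible: Z^n has no nonzero proper A-invariant subgroup I with Z^n/I torsion-free.\<close>
definition irreducible_mat :: "int^'n^'n \<Rightarrow> bool" where
  "irreducible_mat A \<longleftrightarrow>
    \<not> (\<exists>I :: (int^'n) set.
        0 \<in> I \<and> (\<forall>x\<in>I. \<forall>y\<in>I. x + y \<in> I) \<and> (\<forall>x\<in>I. - x \<in> I)
        \<and> I \<noteq> {0} \<and> I \<noteq> UNIV
        \<and> (\<forall>x\<in>I. A *v x \<in> I)
        \<and> (\<forall>(c::int) x. c \<noteq> 0 \<longrightarrow> c *s x \<in> I \<longrightarrow> x \<in> I))"

definition length_function :: "('g, 'b) monoid_scheme \<Rightarrow> ('g \<Rightarrow> real) \<Rightarrow> bool" where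
  "length_function G l \<longleftrightarrow>
     (\<forall>g\<in>carrier G. 0 \<le> l g)
   \<and> (\<forall>g\<in>carrier G. \<forall>n::int. l (g [^]\<^bsub>G\<^esub> n) = \<bar>real_of_int n\<bar> * l g)
   \<and> (\<forall>g\<in>carrier G. \<forall>h\<in>carrier G. l (h \<otimes>\<^bsub>G\<^esub> g \<otimes>\<^bsub>G\<^esub> inv\<^bsub>G\<^esub> h) = l g)
   \<and> (\<forall>a\<in>carrier G. \<forall>b\<in>carrier G. a \<otimes>\<^bsub>G\<^esub> b = b \<otimes>\<^bsub>G\<^esub> a \<longrightarrow>
          l (a \<otimes>\<^bsub>G\<^esub> b) \<le> l a + l b)"

definition infinite_order :: "('g, 'b) monoid_scheme \<Rightarrow> 'g \<Rightarrow> bool" where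
  "infinite_order G g \<longleftrightarrow> (\<forall>n::nat. 0 < n \<longrightarrow> g [^]\<^bsub>G\<^esub> n \<noteq> \<one>\<^bsub>G\<^esub>)"

definition purely_positive :: "('g, 'b) monoid_scheme \<Rightarrow> ('g \<Rightarrow> real) \<Rightarrow> bool" where
  "purely_positive G l \<longleftrightarrow> length_function G l \<and>
     (\<forall>g\<in>carrier G. infinite_order G g \<longrightarrow> 0 < l g)"

definition cmat :: "int^'n^'n \<Rightarrow> complex^'n^'n" where
  "cmat A = (\<chi> i j. of_int (A $ i $ j))"

end

theory Submission
  imports Defs "HOL-Computational_Algebra.Fundamental_Theorem_Algebra"
begin

lemma mv_scalar_commute:
  fixes A :: "'a::comm_ring_1^'n^'m"
  shows "A *v (c *s x) = c *s (A *v x)"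
  by (simp add: vec_eq_iff vector_scalar_mult_def matrix_vector_mult_def mult_ac sum_distrib_left)

lemma mv_neg:
  fixes A :: "'a::comm_ring_1^'n^'m"
  shows "A *v (- x) = - (A *v x)"
  by (simp add: vec_eq_iff matrix_vector_mult_def sum_negf)

lemma matpow_add: "matpow A (a + b) = matpow A a ** matpow A b"
  by (induction a) (auto simp: matrix_mul_assoc)

lemma matpow_Suc': "matpow A (Suc k) = matpow A k ** A"
proof -
  have "matpow A (k + 1) = matpow A k ** matpow A 1" by (rule matpow_add)
  then show ?thesis by simp
qed

locale imat =
  fixes A :: "'a::comm_ring_1^'n^'n"
  assumes inv: "invertible A"
begin

definition "B = matrix_inv A"

lemma AB: "A ** B = mat 1" and BA: "B ** A = mat 1"
proof -
  have "\<exists>A'. A ** A' = mat 1 \<and> A' ** A = mat 1" using inv by (simp add: invertible_def)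
  then have "A ** B = mat 1 \<and> B ** A = mat 1"
    unfolding B_def matrix_inv_def by (rule someI_ex)
  then show "A ** B = mat 1" "B ** A = mat 1" by auto
qed

abbreviation P where "P k \<equiv> matipow A k"

lemma P_0[simp]: "P 0 = mat 1" by (simp add: matipow_def)

lemma P_succ: "P (k + 1) = A ** P k"
proof (cases "k \<ge> 0")
  case True
  then have "nat (k+1) = Suc (nat k)" by simp
  then show ?thesis using True by (simp add: matipow_def)
next
  case False
  show ?thesis
  proof (cases "k = -1")
    case True
    then show ?thesis using AB by (simp add: matipow_def B_def)
  next
    case F2: False
    then have "nat (- k) = Suc (nat (-(k+1)))" using False by simp
    then have "P k = B ** P (k+1)" using False F2 by (simp add: matipow_def B_def)
    then have "A ** P k = (A ** B) ** P (k+1)" by (simp add: matrix_mul_assoc)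
    then show ?thesis by (simp add: AB)
  qed
qed

lemma P_pred: "P (k - 1) = B ** P k"
proof -
  have "P k = A ** P (k - 1)" using P_succ[of "k-1"] by simp
  then have "B ** P k = (B ** A) ** P (k - 1)" by (simp add: matrix_mul_assoc)
  then show ?thesis by (simp add: BA)
qed

lemma P_add: "P (a + b) = P a ** P b"
proof (induction a rule: int_induct[where k=0])
  case base
  then show ?case by simp
next
  case (step1 i)
  have "P (i + 1 + b) = A ** P (i + b)" using P_succ[of "i+b"] by (simp add: ac_simps)
  then show ?case using step1 by (simp add: P_succ matrix_mul_assoc)
next
  case (step2 i)
  have e: "i - 1 + b = i + b - 1" by simp
  have "P (i - 1 + b) = B ** P (i + b)" unfolding e by (rule P_pred)
  then show ?case using step2 by (simp add: P_pred matrix_mul_assoc)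
qed

lemma P_1[simp]: "P 1 = A" using P_succ[of 0] by simp
lemma P_m1[simp]: "P (-1) = B" using P_pred[of 0] by simp

lemma P_comm: "P a ** P b = P b ** P a"
  by (metis P_add add.commute)

lemma Pv_add: "P a *v (P b *v v) = P (a + b) *v v"
  by (simp add: matrix_vector_mul_assoc P_add)

lemma Pv_neg: "P a *v (P (-a) *v v) = v" "P (-a) *v (P a *v v) = v"
  by (simp_all add: Pv_add)

lemma P_A_comm: "A ** P k = P k ** A"
  by (metis P_1 P_comm)

end


locale iimat = imat A for A :: "int^'n^'n"
begin

lemma sd_mult[simp]: "(v,k) \<otimes>\<^bsub>semidirect A\<^esub> (w,m) = (v + P k *v w, k + m)"
  by (simp add: semidirect_def)

lemma sd_one[simp]: "\<one>\<^bsub>semidirect A\<^esub> = (0, 0)"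
  by (simp add: semidirect_def)

lemma sd_carrier[simp]: "carrier (semidirect A) = UNIV"
  by (simp add: semidirect_def)

lemma sd_group: "group (semidirect A)"
proof (rule groupI)
  fix x y z :: "(int^'n) \<times> int"
  obtain v k where x: "x = (v,k)" by (cases x)
  obtain w m where y: "y = (w,m)" by (cases y)
  obtain u p where z: "z = (u,p)" by (cases z)
  show "x \<otimes>\<^bsub>semidirect A\<^esub> y \<otimes>\<^bsub>semidirect A\<^esub> z = x \<otimes>\<^bsub>semidirect A\<^esub> (y \<otimes>\<^bsub>semidirect A\<^esub> z)"
    by (simp add: x y z matrix_vector_right_distrib Pv_add add.assoc)
next
  fix x :: "(int^'n) \<times> int"
  obtain v k where x: "x = (v,k)" by (cases x)
  show "\<one>\<^bsub>semidirect A\<^esub> \<otimes>\<^bsub>semidirect A\<^esub> x = x" by (simp add: x)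
  have "(- (P (-k) *v v), -k) \<otimes>\<^bsub>semidirect A\<^esub> x = \<one>\<^bsub>semidirect A\<^esub>"
    by (simp add: x)
  then show "\<exists>y\<in>carrier (semidirect A). y \<otimes>\<^bsub>semidirect A\<^esub> x = \<one>\<^bsub>semidirect A\<^esub>" by auto
qed auto

interpretation G: group "semidirect A" by (rule sd_group)

lemma sd_inv[simp]: "inv\<^bsub>semidirect A\<^esub> (v,k) = (- (P (-k) *v v), -k)"
  by (rule G.inv_equality) simp_all

fun upow :: "int^'n \<Rightarrow> int \<Rightarrow> nat \<Rightarrow> int^'n" where
  "upow v k 0 = 0"
| "upow v k (Suc j) = upow v k j + P (int j * k) *v v"

lemma sd_pow_nat: "(v,k) [^]\<^bsub>semidirect A\<^esub> (j::nat) = (upow v k j, int j * k)"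
  by (induction j) (simp_all add: algebra_simps)

lemma sd_conj: "(w,m) \<otimes>\<^bsub>semidirect A\<^esub> (v,k) \<otimes>\<^bsub>semidirect A\<^esub> inv\<^bsub>semidirect A\<^esub> (w,m)
   = (w + P m *v v - P k *v w, k)"
proof -
  have "P (m + k) *v (P (-m) *v w) = P k *v w"
    by (simp add: Pv_add)
  then show ?thesis
    by (simp add: matrix_vector_right_distrib mv_neg)
qed

end


locale irr = iimat A for A :: "int^'n^'n" +
  assumes irr: "irreducible_mat A"
begin

lemma irr_use:
  assumes "0 \<in> I" "\<forall>x\<in>I. \<forall>y\<in>I. x + y \<in> I" "\<forall>x\<in>I. - x \<in> I"
    "\<forall>x\<in>I. A *v x \<in> I" "\<forall>(c::int) x. c \<noteq> 0 \<longrightarrow> c *s x \<in> I \<longrightarrow> x \<in> I"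
  shows "I = {0} \<or> I = UNIV"
  using irr assms unfolding irreducible_mat_def by blast

lemma smult_cancel:
  fixes x y :: "int^'n"
  assumes "c \<noteq> 0" "c *s x = c *s y" shows "x = y"
  using assms by (simp add: vec_eq_iff)

lemma fixpt:
  assumes "P k \<noteq> mat 1" "P k *v u = u" shows "u = 0"
proof -
  let ?I = "{u. P k *v u = u}"
  have "?I = {0} \<or> ?I = UNIV"
  proof (rule irr_use)
    show "\<forall>x\<in>?I. A *v x \<in> ?I"
      by (metis (mono_tags) P_A_comm matrix_vector_mul_assoc mem_Collect_eq)
    show "\<forall>(c::int) x. c \<noteq> 0 \<longrightarrow> c *s x \<in> ?I \<longrightarrow> x \<in> ?I"
      by (auto simp: mv_scalar_commute intro: smult_cancel)
  qed (auto simp: matrix_vector_right_distrib mv_neg)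
  moreover have "?I \<noteq> UNIV"
  proof
    assume "?I = UNIV"
    then have "\<forall>x. P k *v x = mat 1 *v x" by auto
    then have "P k = mat 1" by (simp add: matrix_eq)
    with assms show False by simp
  qed
  ultimately show ?thesis using assms by auto
qed

lemma P_neg_one: "P (-k) = mat 1 \<longleftrightarrow> P k = mat 1"
proof -
  have *: "P (-a) = mat 1" if "P a = mat 1" for a
  proof -
    have "P (-a) = P (-a) ** P a" using that by simp
    also have "\<dots> = mat 1" by (simp flip: P_add)
    finally show ?thesis .
  qed
  show ?thesis using *[of k] *[of "-k"] by auto
qed

lemma P_add_one: "P a = mat 1 \<Longrightarrow> P (a + b) = P b" "P b = mat 1 \<Longrightarrow> P (a + b) = P a"
  by (simp_all add: P_add)

end

section \<open>The if direction\<close>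

definition cvec :: "int^'n \<Rightarrow> complex^'n" where
  "cvec x = (\<chi> i. of_int (x $ i))"

locale ifdir = irr A for A :: "int^'n^'n" +
  fixes w :: "complex^'n" and c :: complex
  assumes w_nz: "w \<noteq> 0" and c1: "cmod c = 1"
    and weig: "transpose (cmat A) *v w = c *s w"
begin

definition phi :: "int^'n \<Rightarrow> complex" where
  "phi x = (\<Sum>i\<in>UNIV. w$i * of_int (x$i))"

definition NN :: "int^'n \<Rightarrow> real" where
  "NN x = cmod (phi x)"

lemma phi_add: "phi (x + y) = phi x + phi y"
  by (simp add: phi_def algebra_simps sum.distrib)

lemma phi_neg: "phi (- x) = - phi x"
  by (simp add: phi_def sum_negf)

lemma phi_smult: "phi (j *s x) = of_int j * phi x"
  by (simp add: phi_def sum_distrib_left algebra_simps)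

lemma phi_A: "phi (A *v x) = c * phi x"
proof -
  have h: "(\<Sum>i\<in>UNIV. of_int (A$i$j) * w$i) = c * w$j" for j
  proof -
    have "(transpose (cmat A) *v w) $ j = (c *s w) $ j" using weig by simp
    then show ?thesis
      by (simp add: matrix_vector_mult_def transpose_def cmat_def)
  qed
  have "phi (A *v x) = (\<Sum>i\<in>UNIV. \<Sum>j\<in>UNIV. w$i * (of_int (A$i$j) * of_int (x$j)))"
    by (simp add: phi_def matrix_vector_mult_def sum_distrib_left)
  also have "\<dots> = (\<Sum>j\<in>UNIV. \<Sum>i\<in>UNIV. (of_int (A$i$j) * w$i) * of_int (x$j))"
    by (subst sum.swap) (simp add: algebra_simps)
  also have "\<dots> = (\<Sum>j\<in>UNIV. (c * w$j) * of_int (x$j))"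
    by (simp add: sum_distrib_right[symmetric] h)
  also have "\<dots> = c * phi x"
    by (simp add: phi_def sum_distrib_left algebra_simps)
  finally show ?thesis .
qed

lemma NN_add: "NN (x + y) \<le> NN x + NN y"
  by (simp add: NN_def phi_add norm_triangle_ineq)

lemma NN_smult: "NN (j *s x) = \<bar>real_of_int j\<bar> * NN x"
  by (simp add: NN_def phi_smult norm_mult)

lemma NN_neg[simp]: "NN (- x) = NN x"
  by (simp add: NN_def phi_neg)

lemma NN_0[simp]: "NN 0 = 0"
  by (simp add: NN_def phi_def)

lemma NN_nonneg: "NN x \<ge> 0"
  by (simp add: NN_def)

lemma NN_A: "NN (A *v x) = NN x"
  by (simp add: NN_def phi_A norm_mult c1)

lemma NN_B: "NN (B *v x) = NN x"
proof -
  have "NN x = NN (A *v (B *v x))" by (simp add: matrix_vector_mul_assoc AB)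
  then show ?thesis by (simp add: NN_A)
qed

lemma NN_P: "NN (P m *v x) = NN x"
proof (induction m rule: int_induct[where k=0])
  case (step1 i)
  then show ?case by (simp add: P_succ NN_A flip: matrix_vector_mul_assoc)
next
  case (step2 i)
  then show ?case by (simp add: P_pred NN_B flip: matrix_vector_mul_assoc)
qed simp

lemma phi_zero: "phi x = 0 \<Longrightarrow> x = 0"
proof -
  let ?I = "{x. phi x = 0}"
  have "?I = {0} \<or> ?I = UNIV"
  proof (rule irr_use)
    show "\<forall>x\<in>?I. A *v x \<in> ?I" by (simp add: phi_A)
    show "\<forall>(c::int) x. c \<noteq> 0 \<longrightarrow> c *s x \<in> ?I \<longrightarrow> x \<in> ?I"
      by (simp add: phi_smult)
  qed (auto simp: phi_add phi_neg, simp add: phi_def)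
  moreover have "?I \<noteq> UNIV"
  proof
    assume "?I = UNIV"
    obtain i where "w $ i \<noteq> 0" using w_nz by (auto simp: vec_eq_iff)
    moreover have "phi (axis i 1) = w $ i"
      by (simp add: phi_def axis_def if_distrib cong: if_cong)
    ultimately show False using \<open>?I = UNIV\<close> by (metis UNIV_I mem_Collect_eq)
  qed
  ultimately show "phi x = 0 \<Longrightarrow> x = 0" by auto
qed

lemma NN_pos: "x \<noteq> 0 \<Longrightarrow> NN x > 0"
  using phi_zero by (auto simp: NN_def)

end


context ifdir
begin

interpretation G: group "semidirect A" by (rule sd_group)

definition ll :: "(int^'n) \<times> int \<Rightarrow> real" where
  "ll g = real_of_int \<bar>snd g\<bar> + (if P (snd g) = mat 1 then NN (fst g) else 0)"

lemma ll_simp: "ll (v,k) = real_of_int \<bar>k\<bar> + (if P k = mat 1 then NN v else 0)"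
  by (simp add: ll_def)

lemma ll_nonneg: "ll g \<ge> 0"
  by (simp add: ll_def NN_nonneg)

lemma ll_inv: "ll (inv\<^bsub>semidirect A\<^esub> g) = ll g"
proof -
  obtain v k where g: "g = (v,k)" by (cases g)
  show ?thesis
    using P_neg_one[of k] by (auto simp: g ll_simp)
qed

lemma upow_fix: "P k *v upow v k j + v = upow v k j + P (int j * k) *v v"
proof (induction j)
  case (Suc j)
  have "P k *v upow v k (Suc j) + v = (P k *v upow v k j + v) + P k *v (P (int j * k) *v v)"
    by (simp add: matrix_vector_right_distrib)
  also have "\<dots> = upow v k j + P (int j * k) *v v + P (k + int j * k) *v v"
    by (simp add: Suc Pv_add)
  also have "k + int j * k = int (Suc j) * k" by (simp add: algebra_simps)
  finally show ?case by simp
qed simp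

lemma P_mult_one: "P k = mat 1 \<Longrightarrow> P (int j * k) = mat 1"
proof (induction j)
  case (Suc j)
  have "P (int (Suc j) * k) = P (int j * k + k)" by (simp add: algebra_simps)
  also have "\<dots> = P (int j * k) ** P k" by (rule P_add)
  finally show ?case using Suc by simp
qed simp

lemma upow_triv: "P k = mat 1 \<Longrightarrow> upow v k j = of_nat j *s v"
proof (induction j)
  case (Suc j)
  have "P (int j * k) = mat 1" using Suc.prems by (rule P_mult_one)
  then have "upow v k (Suc j) = of_nat j *s v + v" using Suc by simp
  then show ?case by (simp add: algebra_simps vec_eq_iff)
qed simp

lemma ll_pow_nat: "ll (g [^]\<^bsub>semidirect A\<^esub> (j::nat)) = real j * ll g"
proof -
  obtain v k where g: "g = (v,k)" by (cases g)
  show ?thesis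
  proof (cases "P k = mat 1")
    case True
    then have "P (int j * k) = mat 1" by (rule P_mult_one)
    then show ?thesis using True
      by (simp add: g sd_pow_nat ll_simp upow_triv NN_smult abs_mult algebra_simps)
  next
    case False
    show ?thesis
    proof (cases "P (int j * k) = mat 1")
      case True
      then have "P k *v upow v k j = upow v k j" using upow_fix[of k v j] by simp
      then have "upow v k j = 0" using fixpt False by blast
      then show ?thesis using True False by (simp add: g sd_pow_nat ll_simp abs_mult)
    next
      case F2: False
      then show ?thesis using False by (simp add: g sd_pow_nat ll_simp abs_mult)
    qed
  qed
qed

lemma ll_pow: "ll (g [^]\<^bsub>semidirect A\<^esub> (n::int)) = \<bar>real_of_int n\<bar> * ll g"
proof (cases "n < 0")
  case True
  have "g [^]\<^bsub>semidirect A\<^esub> n = inv\<^bsub>semidirect A\<^esub> (g [^]\<^bsub>semidirect A\<^esub> (nat (-n)))"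
    unfolding int_pow_def2 using True by simp
  then show ?thesis using True by (simp only: ll_inv ll_pow_nat) simp
next
  case False
  have "g [^]\<^bsub>semidirect A\<^esub> n = g [^]\<^bsub>semidirect A\<^esub> (nat n)"
    unfolding int_pow_def2 using False by simp
  then show ?thesis using False by (simp only: ll_pow_nat) simp
qed

lemma ll_conj: "ll (h \<otimes>\<^bsub>semidirect A\<^esub> g \<otimes>\<^bsub>semidirect A\<^esub> inv\<^bsub>semidirect A\<^esub> h) = ll g"
proof -
  obtain v k where g: "g = (v,k)" by (cases g)
  obtain w m where h: "h = (w,m)" by (cases h)
  have e: "h \<otimes>\<^bsub>semidirect A\<^esub> g \<otimes>\<^bsub>semidirect A\<^esub> inv\<^bsub>semidirect A\<^esub> h = (w + P m *v v - P k *v w, k)"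
    unfolding g h by (rule sd_conj)
  show ?thesis
  proof (cases "P k = mat 1")
    case True
    then show ?thesis unfolding e by (simp add: g ll_simp NN_P)
  next
    case False
    then show ?thesis unfolding e by (simp add: g ll_simp)
  qed
qed

lemma ll_comm:
  assumes "a \<otimes>\<^bsub>semidirect A\<^esub> b = b \<otimes>\<^bsub>semidirect A\<^esub> a"
  shows "ll (a \<otimes>\<^bsub>semidirect A\<^esub> b) \<le> ll a + ll b"
proof -
  obtain v k where a: "a = (v,k)" by (cases a)
  obtain w m where b: "b = (w,m)" by (cases b)
  have comm: "v + P k *v w = w + P m *v v" using assms by (simp add: a b)
  have tri: "real_of_int \<bar>k + m\<bar> \<le> real_of_int \<bar>k\<bar> + real_of_int \<bar>m\<bar>" by linarith
  consider "P k = mat 1" "P m = mat 1" | "P k = mat 1" "P m \<noteq> mat 1"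
    | "P k \<noteq> mat 1" "P m = mat 1" | "P k \<noteq> mat 1" "P m \<noteq> mat 1" "P (k+m) \<noteq> mat 1"
    | "P k \<noteq> mat 1" "P m \<noteq> mat 1" "P (k+m) = mat 1" by blast
  then show ?thesis
  proof cases
    case 1
    then show ?thesis using tri NN_add[of v w] by (simp add: a b ll_simp P_add)
  next
    case 2
    then show ?thesis using tri NN_nonneg[of v] NN_nonneg[of w] by (simp add: a b ll_simp P_add)
  next
    case 3
    then show ?thesis using tri NN_nonneg[of v] NN_nonneg[of w] by (simp add: a b ll_simp P_add)
  next
    case 4
    then show ?thesis using tri by (simp add: a b ll_simp)
  next
    case 5
    have "P k *v (v + P k *v w) = v + P k *v w"
    proof -
      have "P k *v (v + P k *v w) = P k *v (w + P m *v v)" using comm by simp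
      also have "\<dots> = P k *v w + P (k + m) *v v"
        by (simp add: matrix_vector_right_distrib Pv_add)
      also have "\<dots> = v + P k *v w" using 5 by simp
      finally show ?thesis .
    qed
    then have "v + P k *v w = 0" using fixpt 5 by blast
    then show ?thesis using tri 5 by (simp add: a b ll_simp)
  qed
qed

lemma ll_lf: "length_function (semidirect A) ll"
  unfolding length_function_def
  using ll_nonneg ll_pow ll_conj ll_comm by auto

lemma ll_pp: "purely_positive (semidirect A) ll"
  unfolding purely_positive_def
proof (intro conjI ll_lf ballI impI)
  fix g assume "infinite_order (semidirect A) g"
  then have "g [^]\<^bsub>semidirect A\<^esub> (Suc 0) \<noteq> \<one>\<^bsub>semidirect A\<^esub>"
    unfolding infinite_order_def by blast
  moreover have "g [^]\<^bsub>semidirect A\<^esub> (Suc 0) = g"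
    unfolding nat_pow_Suc nat_pow_0 by (rule G.l_one) simp
  ultimately have ne: "g \<noteq> (0,0)" by simp
  obtain v k where g: "g = (v,k)" by (cases g)
  show "0 < ll g"
  proof (cases "k = 0")
    case True
    then have "v \<noteq> 0" using ne g by simp
    then show ?thesis using True NN_pos by (simp add: g ll_simp)
  next
    case False
    then have "real_of_int \<bar>k\<bar> > 0" by simp
    then show ?thesis using NN_nonneg[of v] by (simp add: g ll_simp add_pos_nonneg)
  qed
qed

end


lemma mat_mv: "mat c *v v = c *s (v :: 'a::comm_ring_1^'n)"
proof -
  have "(\<Sum>j\<in>UNIV. (if i = j then c else 0) * v $ j) = c * v $ i" for i
  proof -
    have "(\<Sum>j\<in>UNIV. (if i = j then c else 0) * v $ j) = (\<Sum>j\<in>UNIV. if i = j then c * v $ j else 0)"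
      by (rule sum.cong) auto
    then show ?thesis by simp
  qed
  then show ?thesis by (simp add: vec_eq_iff matrix_vector_mult_def mat_def)
qed

lemma left_eig:
  fixes M :: "complex^'n^'n"
  assumes "v \<noteq> 0" "M *v v = c *s v"
  shows "\<exists>w. w \<noteq> 0 \<and> transpose M *v w = c *s w"
proof -
  let ?X = "M - mat c"
  have "?X *v v = 0" using assms by (simp add: matrix_vector_mult_diff_rdistrib mat_mv)
  then have "\<not> inj ((*v) ?X)" using assms(1)
    by (metis injD matrix_vector_mult_0_right)
  then have "det ?X = 0"
    using det_nz_iff_inj_gen[of "(*v) ?X"] by simp
  then have "det (transpose ?X) = 0" by simp
  then have "\<not> inj ((*v) (transpose ?X))"
    using det_nz_iff_inj_gen[of "(*v) (transpose ?X)"] by simp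
  then obtain x y where xy: "x \<noteq> y" "transpose ?X *v x = transpose ?X *v y"
    unfolding inj_def by blast
  let ?w = "x - y"
  have "transpose ?X *v ?w = 0" using xy by (simp add: matrix_vector_mult_diff_distrib)
  moreover have "transpose ?X = transpose M - mat c"
    by (simp add: vec_eq_iff transpose_def mat_def)
  ultimately have "transpose M *v ?w = c *s ?w"
    by (simp add: matrix_vector_mult_diff_rdistrib mat_mv)
  moreover have "?w \<noteq> 0" using xy by simp
  ultimately show ?thesis by blast
qed

lemma if_direction:
  fixes A :: "int^'n^'n"
  assumes "invertible A" "irreducible_mat A"
    and "cmod c = 1" "v \<noteq> 0" "cmat A *v v = c *s v"
  shows "\<exists>l. purely_positive (semidirect A) l"
proof -
  obtain w where w: "w \<noteq> 0" "transpose (cmat A) *v w = c *s w"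
    using left_eig assms(4,5) by blast
  interpret ifdir A w c
    by unfold_locales (use assms w in auto)
  show ?thesis using ll_pp by blast
qed


section \<open>Seminorms on the lattice\<close>

lemma cvec_add[simp]: "cvec (x + y) = cvec x + cvec y"
  by (simp add: cvec_def vec_eq_iff)

lemma cvec_0[simp]: "cvec 0 = 0"
  by (simp add: cvec_def vec_eq_iff)

lemma cvec_mv: "cvec (X *v x) = cmat X *v cvec x"
  by (simp add: cvec_def cmat_def vec_eq_iff matrix_vector_mult_def)

lemma cmat_mult: "cmat (X ** Y) = cmat X ** cmat Y"
  by (simp add: cmat_def vec_eq_iff matrix_matrix_mult_def)

lemma cmat_one: "cmat (mat 1) = mat 1"
  by (simp add: cmat_def vec_eq_iff mat_def)

lemma cvec_axis: "cvec (axis i 1) = axis i 1"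
  by (simp add: cvec_def vec_eq_iff axis_def)

locale snorm = imat A for A :: "int^'n^'n" +
  fixes L :: "int^'n \<Rightarrow> real"
  assumes L_add: "L (x + y) \<le> L x + L y"
    and L_smult: "L (j *s x) = \<bar>real_of_int j\<bar> * L x"
    and L_A: "L (A *v x) = L x"
begin

lemma L_0[simp]: "L 0 = 0"
  using L_smult[of 0 0] by simp

lemma L_neg: "L (- x) = L x"
  using L_smult[of "-1" x] by (simp add: vector_sneg_minus1[symmetric])

lemma L_nonneg: "L x \<ge> 0"
  using L_add[of x "- x"] L_neg[of x] by simp

lemma L_B: "L (B *v x) = L x"
proof -
  have "L x = L (A *v (B *v x))" by (simp add: matrix_vector_mul_assoc AB)
  then show ?thesis by (simp add: L_A)
qed

lemma L_sum: "L (\<Sum>j\<in>F. f j) \<le> (\<Sum>j\<in>F. L (f j))"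
proof (induction F rule: infinite_finite_induct)
  case (insert a F)
  then show ?case using L_add[of "f a" "sum f F"] by simp
qed simp_all

lemma L_basis: "L e \<le> (\<Sum>i\<in>UNIV. real_of_int \<bar>e$i\<bar> * L (axis i 1))"
proof -
  have "L e = L (\<Sum>i\<in>UNIV. (e$i) *s axis i 1)" by (simp add: basis_expansion)
  also have "\<dots> \<le> (\<Sum>i\<in>UNIV. L ((e$i) *s axis i 1))" by (rule L_sum)
  also have "\<dots> = (\<Sum>i\<in>UNIV. real_of_int \<bar>e$i\<bar> * L (axis i 1))" by (simp add: L_smult)
  finally show ?thesis .
qed

lemma floor_abs_le: "\<bar>real_of_int \<lfloor>y\<rfloor>\<bar> \<le> \<bar>y\<bar> + 1"
  by linarith

lemma approx:
  assumes eq: "cvec x = (\<Sum>j<k. a j *s cvec (u j))"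
  shows "L x \<le> (\<Sum>j<k. cmod (a j) * L (u j))"
proof -
  define r where "r j = Re (a j)" for j
  have xr: "real_of_int (x$i) = (\<Sum>j<k. r j * real_of_int (u j $ i))" for i
  proof -
    have "cvec x $ i = (\<Sum>j<k. a j * of_int (u j $ i))" using eq by (simp add: cvec_def)
    then have "Re (of_int (x$i)) = Re (\<Sum>j<k. a j * of_int (u j $ i))" by (simp add: cvec_def)
    then show ?thesis by (simp add: r_def)
  qed
  define C where "C = (\<Sum>j<k. cmod (a j) * L (u j))"
  define K where "K = (\<Sum>j<k. L (u j)) + (\<Sum>i\<in>UNIV. (\<Sum>j<k. real_of_int \<bar>u j $ i\<bar>) * L (axis i 1))"
  have K0: "K \<ge> 0" unfolding K_def
    by (intro add_nonneg_nonneg sum_nonneg mult_nonneg_nonneg L_nonneg) auto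
  have main: "real d * L x \<le> real d * C + K" for d :: nat
  proof -
    define p where "p j = floor (real d * r j)" for j
    define e where "e = of_nat d *s x - (\<Sum>j<k. p j *s u j)"
    have e_bound: "real_of_int \<bar>e$i\<bar> \<le> (\<Sum>j<k. real_of_int \<bar>u j $ i\<bar>)" for i
    proof -
      have "real_of_int (e$i) = real d * real_of_int (x$i) - (\<Sum>j<k. real_of_int (p j) * real_of_int (u j $ i))"
        by (simp add: e_def)
      also have "\<dots> = (\<Sum>j<k. (real d * r j - real_of_int (p j)) * real_of_int (u j $ i))"
        by (simp add: xr sum_distrib_left algebra_simps sum_subtractf)
      finally have "\<bar>real_of_int (e$i)\<bar> \<le> (\<Sum>j<k. \<bar>(real d * r j - real_of_int (p j)) * real_of_int (u j $ i)\<bar>)"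
        by (metis sum_abs)
      also have "\<dots> \<le> (\<Sum>j<k. real_of_int \<bar>u j $ i\<bar>)"
      proof (rule sum_mono)
        fix j
        have "0 \<le> real d * r j - real_of_int (p j)" "real d * r j - real_of_int (p j) \<le> 1"
          unfolding p_def by linarith+
        then show "\<bar>(real d * r j - real_of_int (p j)) * real_of_int (u j $ i)\<bar> \<le> real_of_int \<bar>u j $ i\<bar>"
          by (simp add: abs_mult mult_left_le_one_le)
      qed
      finally show ?thesis by simp
    qed
    have Le: "L e \<le> (\<Sum>i\<in>UNIV. (\<Sum>j<k. real_of_int \<bar>u j $ i\<bar>) * L (axis i 1))"
      using L_basis[of e] e_bound
      by (smt (verit) L_nonneg mult_right_mono sum_mono)
    have pj: "\<bar>real_of_int (p j)\<bar> * L (u j) \<le> (real d * cmod (a j) + 1) * L (u j)" for j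
    proof -
      have "\<bar>real_of_int (p j)\<bar> \<le> \<bar>real d * r j\<bar> + 1" unfolding p_def by (rule floor_abs_le)
      also have "\<bar>real d * r j\<bar> \<le> real d * cmod (a j)"
        using abs_Re_le_cmod[of "a j"] by (simp add: r_def abs_mult mult_left_mono)
      finally show ?thesis using L_nonneg by (intro mult_right_mono) auto
    qed
    have "of_nat d *s x = e + (\<Sum>j<k. p j *s u j)" by (simp add: e_def)
    then have "real d * L x = L (e + (\<Sum>j<k. p j *s u j))"
      using L_smult[of "int d" x] by simp
    also have "\<dots> \<le> L e + (\<Sum>j<k. L (p j *s u j))"
      using L_add[of e "\<Sum>j<k. p j *s u j"] L_sum[of "\<lambda>j. p j *s u j" "{..<k}"] by linarith
    also have "\<dots> = L e + (\<Sum>j<k. \<bar>real_of_int (p j)\<bar> * L (u j))"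
      by (simp add: L_smult)
    also have "\<dots> \<le> L e + (\<Sum>j<k. (real d * cmod (a j) + 1) * L (u j))"
      using pj by (simp add: sum_mono)
    also have "\<dots> = L e + real d * C + (\<Sum>j<k. L (u j))"
      by (simp add: C_def algebra_simps sum.distrib sum_distrib_left)
    also have "\<dots> \<le> real d * C + K"
      using Le by (simp add: K_def)
    finally show ?thesis .
  qed
  show ?thesis
  proof (rule ccontr)
    assume "\<not> ?thesis"
    then have pos: "L x - C > 0" by (simp add: C_def)
    obtain d :: nat where d: "K / (L x - C) < real d" using reals_Archimedean2 by blast
    then have "K < real d * (L x - C)" using pos by (simp add: field_simps)
    with main[of d] show False by (simp add: algebra_simps)
  qed
qed

end


context snorm
begin

definition val :: "(complex \<times> (int^'n)) list \<Rightarrow> complex^'n" where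
  "val ps = sum_list (map (\<lambda>p. fst p *s cvec (snd p)) ps)"

definition cost :: "(complex \<times> (int^'n)) list \<Rightarrow> real" where
  "cost ps = sum_list (map (\<lambda>p. cmod (fst p) * L (snd p)) ps)"

definition S :: "complex^'n \<Rightarrow> real" where
  "S z = Inf (cost ` {ps. val ps = z})"

lemma cost_nonneg: "cost ps \<ge> 0"
  unfolding cost_def by (induction ps) (auto intro!: add_nonneg_nonneg mult_nonneg_nonneg L_nonneg)

lemma val_append[simp]: "val (ps @ qs) = val ps + val qs"
  by (simp add: val_def)

lemma cost_append[simp]: "cost (ps @ qs) = cost ps + cost qs"
  by (simp add: cost_def)

lemma rep_ex: "\<exists>ps. val ps = z"
proof -
  obtain xs :: "'n list" where xs: "set xs = UNIV" "distinct xs"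
    using finite_distinct_list[of "UNIV :: 'n set"] by auto
  have "val (map (\<lambda>i. (z$i, axis i 1)) xs) = (\<Sum>i\<in>UNIV. z$i *s axis i 1)"
    unfolding val_def using xs by (simp add: o_def cvec_axis sum_list_distinct_conv_sum_set)
  also have "\<dots> = z" by (rule basis_expansion)
  finally show ?thesis by blast
qed

lemma S_le: "val ps = z \<Longrightarrow> S z \<le> cost ps"
  unfolding S_def by (rule cInf_lower) (auto intro: bdd_belowI[where m=0] cost_nonneg)

lemma S_ge: "(\<And>ps. val ps = z \<Longrightarrow> c \<le> cost ps) \<Longrightarrow> c \<le> S z"
  unfolding S_def by (rule cInf_greatest) (use rep_ex in auto)

lemma S_nonneg: "S z \<ge> 0"
  by (rule S_ge) (rule cost_nonneg)

lemma S_add: "S (z + y) \<le> S z + S y"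
proof -
  have "S (z + y) - cost qs \<le> S z" if qs: "val qs = y" for qs
  proof (rule S_ge)
    fix ps assume "val ps = z"
    then have "S (z + y) \<le> cost (ps @ qs)" using qs by (intro S_le) simp
    then show "S (z + y) - cost qs \<le> cost ps" by simp
  qed
  then have "S (z + y) - S z \<le> S y" by (intro S_ge) (smt (verit))
  then show ?thesis by simp
qed

lemma val_scale: "val (map (\<lambda>p. (a * fst p, snd p)) ps) = a *s val ps"
  unfolding val_def by (induction ps) (simp_all add: vector_add_ldistrib vector_smult_assoc)

lemma cost_scale: "cost (map (\<lambda>p. (a * fst p, snd p)) ps) = cmod a * cost ps"
  unfolding cost_def by (induction ps) (simp_all add: norm_mult algebra_simps)

lemma S_scale: "S (a *s z) \<le> cmod a * S z"
proof (cases "a = 0")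
  case True
  have "S 0 \<le> cost []" by (rule S_le) (simp add: val_def)
  then show ?thesis using True by (simp add: cost_def)
next
  case False
  have "S (a *s z) / cmod a \<le> S z"
  proof (rule S_ge)
    fix ps assume "val ps = z"
    then have "S (a *s z) \<le> cmod a * cost ps"
      using S_le[of "map (\<lambda>p. (a * fst p, snd p)) ps"] by (simp add: val_scale cost_scale)
    then show "S (a *s z) / cmod a \<le> cost ps" using False by (simp add: field_simps)
  qed
  then show ?thesis using False by (simp add: field_simps)
qed

lemma S_scale_eq: "a \<noteq> 0 \<Longrightarrow> S (a *s z) = cmod a * S z"
proof -
  assume a: "a \<noteq> 0"
  have "S z = S (inverse a *s (a *s z))" using a by (simp add: vector_smult_assoc)
  also have "\<dots> \<le> cmod (inverse a) * S (a *s z)" by (rule S_scale)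
  finally have "S z \<le> S (a *s z) / cmod a" by (simp add: norm_inverse divide_inverse mult.commute)
  then have "cmod a * S z \<le> S (a *s z)" using a by (simp add: field_simps)
  with S_scale[of a z] show ?thesis by simp
qed

lemma S_matX:
  assumes LX: "\<And>w. L (X *v w) = L w"
  shows "S (cmat X *v z) \<le> S z"
proof (rule S_ge)
  fix ps assume ps: "val ps = z"
  have "val (map (\<lambda>p. (fst p, X *v snd p)) ps) = cmat X *v val ps"
    unfolding val_def
    by (induction ps) (simp_all add: matrix_vector_right_distrib vector_scalar_commute cvec_mv)
  moreover have "cost (map (\<lambda>p. (fst p, X *v snd p)) ps) = cost ps"
    unfolding cost_def by (induction ps) (simp_all add: LX)
  ultimately show "S (cmat X *v z) \<le> cost ps"
    using S_le ps by metis
qed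

lemma S_M: "S (cmat A *v z) = S z"
proof -
  have "S z = S (cmat B *v (cmat A *v z))"
    by (simp add: matrix_vector_mul_assoc cmat_mult[symmetric] BA cmat_one)
  also have "\<dots> \<le> S (cmat A *v z)" by (rule S_matX) (rule L_B)
  finally show ?thesis using S_matX[of A z] L_A by fastforce
qed

lemma S_neg: "S (- z) = S z"
  using S_scale_eq[of "-1" z] by (simp add: vector_sneg_minus1[symmetric])

lemma L_le_S: "L x \<le> S (cvec x)"
proof (rule S_ge)
  fix ps assume ps: "val ps = cvec x"
  have "val ps = (\<Sum>j<length ps. fst (ps!j) *s cvec (snd (ps!j)))"
    unfolding val_def by (simp add: sum_list_sum_nth atLeast0LessThan)
  then have "L x \<le> (\<Sum>j<length ps. cmod (fst (ps!j)) * L (snd (ps!j)))"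
    using ps by (intro approx) simp
  also have "\<dots> = cost ps"
    unfolding cost_def by (simp add: sum_list_sum_nth atLeast0LessThan)
  finally show "L x \<le> cost ps" .
qed

end


section \<open>Annihilating polynomials\<close>

lemma smult_sum: "(c::'a::comm_ring_1) *s (\<Sum>i\<in>F. f i) = (\<Sum>i\<in>F. c *s f i)"
  by (induction F rule: infinite_finite_induct) (simp_all add: vector_add_ldistrib)

lemma mv_sum: "(M::'a::comm_ring_1^'n^'m) *v (\<Sum>i\<in>F. f i) = (\<Sum>i\<in>F. M *v f i)"
  by (induction F rule: infinite_finite_induct) (simp_all add: matrix_vector_right_distrib)

definition pv :: "complex^'n^'n \<Rightarrow> complex poly \<Rightarrow> complex^'n \<Rightarrow> complex^'n" where
  "pv M p z = (\<Sum>i<Suc (degree p). coeff p i *s (matpow M i *v z))"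

lemma pv_bound:
  assumes "degree p < N"
  shows "pv M p z = (\<Sum>i<N. coeff p i *s (matpow M i *v z))"
  unfolding pv_def
proof (rule sum.mono_neutral_right[symmetric])
  show "\<forall>i\<in>{..<N} - {..<Suc (degree p)}. coeff p i *s (matpow M i *v z) = 0"
    by (auto simp: coeff_eq_0)
qed (use assms in auto)

lemma pv_add: "pv M (p + q) z = pv M p z + pv M q z"
proof -
  define N where "N = Suc (max (degree p) (degree q))"
  have "degree (p + q) < N" unfolding N_def using degree_add_le_max[of p q] by linarith
  then show ?thesis
    by (simp add: pv_bound[of _ N] N_def vector_sadd_rdistrib sum.distrib)
qed

lemma pv_smult: "pv M (smult a p) z = a *s pv M p z"
proof -
  have "degree (smult a p) < Suc (degree p)" using degree_smult_le[of a p] by linarith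
  then show ?thesis
    by (simp add: pv_bound[of _ "Suc (degree p)"] smult_sum vector_smult_assoc)
qed

lemma pv_shift: "pv M (pCons 0 p) z = M *v pv M p z"
proof -
  have "degree (pCons 0 p) < Suc (Suc (degree p))" by simp
  then have "pv M (pCons 0 p) z = (\<Sum>i<Suc (Suc (degree p)). coeff (pCons 0 p) i *s (matpow M i *v z))"
    by (rule pv_bound)
  also have "\<dots> = (\<Sum>i<Suc (degree p). coeff p i *s (matpow M (Suc i) *v z))"
    by (subst sum.lessThan_Suc_shift) simp
  also have "\<dots> = M *v pv M p z"
    unfolding pv_def mv_sum
    by (simp add: vector_scalar_commute matrix_vector_mul_assoc del: sum.lessThan_Suc)
  finally show ?thesis .
qed

lemma pv_one: "pv M 1 z = z"
  by (simp add: pv_def)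

lemma pv_lin: "pv M ([:-a, 1:] * q) z = M *v pv M q z - a *s pv M q z"
proof -
  have "[:-a, 1:] * q = smult (-a) q + pCons 0 q" by simp
  then have "pv M ([:-a, 1:] * q) z = pv M (smult (-a) q) z + pv M (pCons 0 q) z"
    by (simp only: pv_add)
  then show ?thesis by (simp only: pv_smult pv_shift vector_smult_lneg) simp
qed

fun opl :: "complex^'n^'n \<Rightarrow> complex list \<Rightarrow> complex^'n \<Rightarrow> complex^'n" where
  "opl M [] z = z"
| "opl M (a # xs) z = M *v opl M xs z - a *s opl M xs z"

lemma pv_prod: "pv M (\<Prod>x\<leftarrow>xs. [:-x, 1:]) z = opl M xs z"
proof (induction xs)
  case (Cons a xs)
  have "pv M (\<Prod>x\<leftarrow>a # xs. [:-x, 1:]) z = pv M ([:-a, 1:] * (\<Prod>x\<leftarrow>xs. [:-x, 1:])) z"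
    by simp
  also have "\<dots> = opl M (a # xs) z" by (simp only: pv_lin Cons.IH opl.simps)
  finally show ?case .
qed (simp add: pv_one)

lemma dep_poly:
  fixes M :: "complex^'n^'n"
  shows "\<exists>p. p \<noteq> 0 \<and> pv M p z = 0"
proof -
  define f where "f i = matpow M i *v z" for i
  define n where "n = CARD('n)"
  show ?thesis
  proof (cases "inj_on f {..n}")
    case True
    define T where "T = f ` {..n}"
    have fin: "finite T" by (simp add: T_def)
    have cardT: "card T = Suc n" using True by (simp add: T_def card_image)
    have "vec.dim T \<le> n"
      using vec.dim_subset_UNIV[of T] by (simp add: vec.dimension_def card_cart_basis n_def)
    then have "vec.dependent T"
      using cardT by (intro vec.dependent_biggerset_general) simp
    then obtain c where c: "(\<Sum>v\<in>T. c v *s v) = 0" "\<exists>v\<in>T. c v \<noteq> 0"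
      using fin vec.independent_explicit by blast
    define p where "p = (\<Sum>i\<le>n. monom (c (f i)) i)"
    have cp: "coeff p i = (if i \<le> n then c (f i) else 0)" for i
      by (simp add: p_def coeff_sum coeff_monom)
    have "degree p < Suc n" using degree_le[of n p] cp by auto
    then have "pv M p z = (\<Sum>i<Suc n. coeff p i *s f i)" by (simp add: pv_bound f_def)
    also have "\<dots> = (\<Sum>i\<in>{..n}. c (f i) *s f i)"
      by (rule sum.cong) (auto simp: cp)
    also have "\<dots> = (\<Sum>v\<in>T. c v *s v)"
      unfolding T_def using True by (simp add: sum.reindex)
    finally have "pv M p z = 0" using c by simp
    moreover have "p \<noteq> 0"
    proof
      assume "p = 0"
      obtain v where "v \<in> T" "c v \<noteq> 0" using c by blast
      then obtain i where "i \<le> n" "v = f i" by (auto simp: T_def)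
      then have "coeff p i \<noteq> 0" using cp \<open>c v \<noteq> 0\<close> by simp
      with \<open>p = 0\<close> show False by simp
    qed
    ultimately show ?thesis by blast
  next
    case False
    then obtain i j where ij: "i \<le> n" "j \<le> n" "i \<noteq> j" "f i = f j"
      unfolding inj_on_def by auto
    define p where "p = monom (1::complex) i - monom 1 j"
    have cp: "coeff p k = (if k = i then 1 else 0) - (if k = j then 1 else 0)" for k
      by (simp add: p_def coeff_monom)
    have "degree p < Suc (max i j)" using degree_le[of "max i j" p] cp by auto
    then have "pv M p z = (\<Sum>k<Suc (max i j). coeff p k *s f k)" by (simp add: pv_bound f_def)
    also have "\<dots> = (\<Sum>k<Suc (max i j). (if k = i then f k else 0) - (if k = j then f k else 0))"
      by (rule sum.cong) (auto simp: cp)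
    also have "\<dots> = f i - f j"
      by (simp add: sum_subtractf)
    finally have "pv M p z = 0" using ij by simp
    moreover have "p \<noteq> 0"
    proof
      assume "p = 0"
      then have "coeff p i = 0" by simp
      with cp[of i] ij show False by simp
    qed
    ultimately show ?thesis by blast
  qed
qed

lemma annih:
  fixes M :: "complex^'n^'n"
  shows "\<exists>xs. opl M xs z = 0"
proof -
  obtain p where p: "p \<noteq> 0" "pv M p z = 0" using dep_poly by blast
  obtain xs where xs: "mset xs = proots p" using ex_mset by blast
  have "p = smult (lead_coeff p) (\<Prod>x\<in>#proots p. [:-x, 1:])"
    by (rule complex_poly_decompose_multiset[symmetric])
  also have "(\<Prod>x\<in>#proots p. [:-x, 1:]) = (\<Prod>x\<leftarrow>xs. [:-x, 1:])"
    by (metis xs mset_map prod_mset_prod_list)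
  finally have "pv M p z = lead_coeff p *s opl M xs z"
    by (metis pv_smult pv_prod)
  then have "opl M xs z = 0" using p by simp
  then show ?thesis by blast
qed


section \<open>No unit eigenvalue forces S to vanish\<close>

lemma opl_diff: "opl M xs (z - y) = opl M xs z - opl M xs y"
  by (induction xs) (simp_all add: matrix_vector_mult_diff_distrib vector_ssub_ldistrib)

lemma opl_scale: "opl M xs (a *s z) = a *s opl M xs z"
  by (induction xs) (simp_all add: vector_scalar_commute vector_ssub_ldistrib vector_smult_assoc mult.commute)

lemma opl_M: "opl M xs (M *v z) = M *v opl M xs z"
  by (induction xs) (simp_all add: vector_scalar_commute matrix_vector_mult_diff_distrib)

lemma opl_step: "opl M (a # xs) z = opl M xs (M *v z - a *s z)"
  by (simp add: opl_diff opl_scale opl_M)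

context snorm
begin

lemma S_zero:
  assumes noeig: "\<forall>c v. cmod c = 1 \<longrightarrow> cmat A *v v = c *s v \<longrightarrow> v = 0"
  shows "opl (cmat A) xs z = 0 \<Longrightarrow> S z = 0"
proof (induction xs arbitrary: z)
  case Nil
  then have "S z \<le> cost []" by (intro S_le) (simp add: val_def)
  then show ?case using S_nonneg[of z] by (simp add: cost_def)
next
  case (Cons a xs)
  let ?M = "cmat A"
  define y where "y = ?M *v z - a *s z"
  have "opl ?M xs y = 0" using Cons.prems unfolding y_def by (simp only: opl_step[symmetric])
  then have Sy: "S y = 0" by (rule Cons.IH)
  have Sz: "S z \<ge> 0" by (rule S_nonneg)
  consider "cmod a < 1" | "cmod a > 1" | "cmod a = 1" by linarith
  then show ?case
  proof cases
    case 1
    have "S z = S (?M *v z)" by (simp add: S_M)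
    also have "?M *v z = y + a *s z" by (simp add: y_def)
    also have "S (y + a *s z) \<le> S y + S (a *s z)" by (rule S_add)
    also have "\<dots> \<le> cmod a * S z" using Sy S_scale[of a z] by simp
    finally have "(1 - cmod a) * S z \<le> 0" by (simp add: algebra_simps)
    then show ?thesis using 1 Sz by (smt (verit) mult_pos_pos)
  next
    case 2
    have "a \<noteq> 0" using 2 by auto
    then have "cmod a * S z = S (a *s z)" by (simp add: S_scale_eq)
    also have "a *s z = ?M *v z + (- y)" by (simp add: y_def)
    also have "S (?M *v z + (- y)) \<le> S (?M *v z) + S (- y)" by (rule S_add)
    also have "\<dots> = S z" by (simp add: S_M S_neg Sy)
    finally have "(cmod a - 1) * S z \<le> 0" by (simp add: algebra_simps)
    then show ?thesis using 2 Sz by (smt (verit) mult_pos_pos)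
  next
    case 3
    have "?M *v opl ?M xs z - a *s opl ?M xs z = 0" using Cons.prems by simp
    then have "?M *v opl ?M xs z = a *s opl ?M xs z" by simp
    then have "opl ?M xs z = 0" using noeig 3 by blast
    then show ?thesis by (rule Cons.IH)
  qed
qed

end

section \<open>The only-if direction\<close>

context iimat
begin

interpretation G: group "semidirect A" by (rule sd_group)

lemma upow0: "upow v 0 j = of_nat j *s v"
  by (induction j) (simp_all add: vec_eq_iff algebra_simps)

lemma pow0_int: "(v,0) [^]\<^bsub>semidirect A\<^esub> (j::int) = (j *s v, 0)"
proof (cases "j < 0")
  case True
  have "(v,0) [^]\<^bsub>semidirect A\<^esub> j = inv\<^bsub>semidirect A\<^esub> ((v,0) [^]\<^bsub>semidirect A\<^esub> (nat (-j)))"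
    unfolding int_pow_def2 using True by simp
  also have "\<dots> = (j *s v, 0)" using True
    by (simp add: sd_pow_nat upow0 vec_eq_iff)
  finally show ?thesis .
next
  case False
  have "(v,0) [^]\<^bsub>semidirect A\<^esub> j = (v,0) [^]\<^bsub>semidirect A\<^esub> (nat j)"
    unfolding int_pow_def2 using False by simp
  also have "\<dots> = (j *s v, 0)" using False
    by (simp add: sd_pow_nat upow0 vec_eq_iff)
  finally show ?thesis .
qed

lemma snorm_from_l:
  assumes lf: "length_function (semidirect A) l"
  shows "snorm A (\<lambda>v. l (v, 0))"
proof
  fix x y :: "int^'n"
  have c: "(x,0) \<otimes>\<^bsub>semidirect A\<^esub> (y,0) = (y,0) \<otimes>\<^bsub>semidirect A\<^esub> (x,0)" by (simp add: add.commute)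
  then show "l (x + y, 0) \<le> l (x, 0) + l (y, 0)"
    using lf unfolding length_function_def by (metis UNIV_I sd_carrier sd_mult P_0 matrix_vector_mul_lid add_0)
next
  fix j :: int and x :: "int^'n"
  show "l (j *s x, 0) = \<bar>real_of_int j\<bar> * l (x, 0)"
    using lf unfolding length_function_def by (metis UNIV_I sd_carrier pow0_int)
next
  fix x :: "int^'n"
  have "(0,1) \<otimes>\<^bsub>semidirect A\<^esub> (x,0) \<otimes>\<^bsub>semidirect A\<^esub> inv\<^bsub>semidirect A\<^esub> (0,1) = (A *v x, 0)"
    using sd_conj[of 0 1 x 0] by simp
  then show "l (A *v x, 0) = l (x, 0)"
    using lf unfolding length_function_def by (metis UNIV_I sd_carrier)
qed

lemma l_pos:
  assumes pp: "purely_positive (semidirect A) l" and v: "v \<noteq> 0"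
  shows "l (v, 0) > 0"
proof -
  have "infinite_order (semidirect A) (v, 0)"
    unfolding infinite_order_def
  proof (intro allI impI)
    fix n :: nat assume "0 < n"
    then show "(v,0) [^]\<^bsub>semidirect A\<^esub> n \<noteq> \<one>\<^bsub>semidirect A\<^esub>"
      using v by (simp add: sd_pow_nat upow0)
  qed
  then show ?thesis using pp unfolding purely_positive_def by simp
qed

end

lemma only_if_direction:
  fixes A :: "int^'n^'n"
  assumes inv: "invertible A" and pp: "purely_positive (semidirect A) l"
  shows "\<exists>c::complex. cmod c = 1 \<and> (\<exists>v::complex^'n. v \<noteq> 0 \<and> cmat A *v v = c *s v)"
proof (rule ccontr)
  assume no: "\<not> ?thesis"
  interpret iimat A by unfold_locales (rule inv)
  have lf: "length_function (semidirect A) l" using pp by (simp add: purely_positive_def)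
  interpret sn: snorm A "\<lambda>v. l (v, 0)" by (rule snorm_from_l[OF lf])
  obtain i :: 'n where True by blast
  let ?x = "axis i (1::int)"
  have x0: "?x \<noteq> 0" by (simp add: axis_eq_0_iff)
  obtain xs where "opl (cmat A) xs (cvec ?x) = 0" using annih by blast
  moreover have "\<forall>c v. cmod c = 1 \<longrightarrow> cmat A *v v = c *s v \<longrightarrow> v = 0" using no by blast
  ultimately have "sn.S (cvec ?x) = 0" using sn.S_zero by blast
  then have "l (?x, 0) \<le> 0" using sn.L_le_S[of ?x] by simp
  with l_pos[OF pp x0] show False by simp
qed

theorem corollary13:
  fixes A :: "int^'n^'n"
  assumes "invertible A"
    and "irreducible_mat A"
  shows "(\<exists>l. purely_positive (semidirect A) l) \<longleftrightarrow>
         (\<exists>c::complex. cmod c = 1 \<and> (\<exists>v::complex^'n. v \<noteq> 0 \<and> cmat A *v v = c *s v))"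
  using only_if_direction[OF assms(1)] if_direction[OF assms] by blast

end
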